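(* The competitive ratio of every Move-To-Front-Every-Other-Access algorithm (for any choice of initial bits) is exactly $2.5$ (full cost model): $2.5$ is the infimum of the constants $c$ for which there exists $b$ with $A(\sigma)\le c\cdot\mathrm{OPT}(\sigma)+b$ for all request sequences $\sigma$.
   Context: Static list update: a list of $l$ distinct items in some initial order; serving a request to the item at position $i$ (from the front) costs $i$ (full cost model); the accessed item may be moved closer to the front for free (free exchange); two adjacent items may be swapped at cost $1$ (paid exchange). $A(\sigma)$ is the total cost of algorithm $A$ and $\mathrm{OPT}(\sigma)$ the minimum cost of any offline algorithm from the same initial list. The constant $b$ may depend on the list length but not on $\sigma$. A Move-To-Front-Every-Other-Access (MTF2) algorithm maintains one bit per item, with arbitrary initial values; on each request to an item $z$ it flips the bit of $z$, and if the bit becomes $0$ it moves $z$ to the front (free exchange), otherwise it leaves the list unchanged; it makes no paid exchanges. *)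

theory Defs
  imports Complex_Main
begin

text \<open>Position of an item in a list, counted from 0 (the cost of accessing it is pos + 1).\<close>
fun pos :: "'a \<Rightarrow> 'a list \<Rightarrow> nat" where
  "pos x [] = 0"
| "pos x (y # ys) = (if x = y then 0 else Suc (pos x ys))"

definition swap :: "nat \<Rightarrow> 'a list \<Rightarrow> 'a list" where
  "swap i xs = xs[i := xs ! Suc i, Suc i := xs ! i]"

text \<open>Free exchange: move item x to position q (meant for q no larger than its current position).\<close>
definition move_to :: "nat \<Rightarrow> 'a \<Rightarrow> 'a list \<Rightarrow> 'a list" where
  "move_to q x xs = take q (remove1 x xs) @ x # drop q (remove1 x xs)"

inductive paid :: "'a list \<Rightarrow> 'a list \<Rightarrow> nat \<Rightarrow> bool" where
  paid_refl: "paid xs xs 0"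
| paid_step: "paid xs ys k \<Longrightarrow> Suc i < length ys \<Longrightarrow> paid xs (swap i ys) (Suc k)"

inductive offline :: "'a list \<Rightarrow> 'a list \<Rightarrow> nat \<Rightarrow> bool" where
  off_nil: "offline xs [] 0"
| off_cons: "paid xs ys k \<Longrightarrow> r \<in> set ys \<Longrightarrow> q \<le> pos r ys \<Longrightarrow>
     offline (move_to q r ys) rs c \<Longrightarrow> offline xs (r # rs) (k + (pos r ys + 1) + c)"

definition OPT :: "'a list \<Rightarrow> 'a list \<Rightarrow> nat" where
  "OPT xs rs = Inf {c. offline xs rs c}"

text \<open>Cost of MTF2 with current bit vector b (False = bit 0, True = bit 1) on list xs.
  On request z the bit of z is flipped; if it becomes 0, z is moved to the front.\<close>
fun mtf2_cost :: "('a \<Rightarrow> bool) \<Rightarrow> 'a list \<Rightarrow> 'a list \<Rightarrow> nat" where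
  "mtf2_cost b xs [] = 0"
| "mtf2_cost b xs (z # zs) =
     pos z xs + 1 +
     (let b' = b(z := \<not> b z) in mtf2_cost b' (if b' z then xs else move_to 0 z xs) zs)"

definition MTF2 :: "('a list \<Rightarrow> 'a \<Rightarrow> bool) \<Rightarrow> 'a list \<Rightarrow> 'a list \<Rightarrow> nat" where
  "MTF2 init xs rs = mtf2_cost (init xs) xs rs"

definition competitive :: "(nat list \<Rightarrow> nat list \<Rightarrow> nat) \<Rightarrow> real \<Rightarrow> bool" where
  "competitive A c \<longleftrightarrow>
     (\<forall>l. \<exists>b::real. \<forall>xs rs. distinct xs \<and> length xs = l \<and> set rs \<subseteq> set xs \<longrightarrow>
        real (A xs rs) \<le> c * real (OPT xs rs) + b)"

definition competitive_ratio :: "(nat list \<Rightarrow> nat list \<Rightarrow> nat) \<Rightarrow> real" where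
  "competitive_ratio A = Inf {c. competitive A c}"

end

theory Submission
  imports Defs
begin


lemma pos_append: "pos x (xs @ ys) = (if x \<in> set xs then pos x xs else length xs + pos x ys)"
  by (induction xs) auto

lemma pos_less: "x \<in> set xs \<Longrightarrow> pos x xs < length xs"
  by (induction xs) auto

lemma move_to_pos: "x \<in> set xs \<Longrightarrow> move_to (pos x xs) x xs = xs"
  by (induction xs) (auto simp: move_to_def)

lemma move_to_0: "move_to 0 x xs = x # remove1 x xs"
  by (simp add: move_to_def)

definition triple :: "'a list \<Rightarrow> 'a list" where
  "triple zs = concat (map (\<lambda>z. [z,z,z]) zs)"

lemma triple_simps[simp]: "triple [] = []" "triple (z#zs) = z # z # z # triple zs"
  by (simp_all add: triple_def)

lemma set_triple[simp]: "set (triple zs) = set zs"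
  by (induction zs) auto

lemma P1: "distinct (a @ zs) \<Longrightarrow> \<forall>z\<in>set zs. b z \<Longrightarrow>
  mtf2_cost b (a @ zs) (zs @ rest) = (\<Sum>k<length zs. length a + k + 1)
     + mtf2_cost (\<lambda>x. if x \<in> set zs then False else b x) (rev zs @ a) rest"
proof (induction zs arbitrary: a b)
  case Nil
  then show ?case by simp
next
  case (Cons z zs)
  have za: "z \<notin> set a" "z \<notin> set zs" using Cons.prems by auto
  have mv: "move_to 0 z (a @ z # zs) = (z # a) @ zs"
    using za by (simp add: move_to_0 remove1_append)
  have IH: "mtf2_cost (b(z := False)) ((z # a) @ zs) (zs @ rest) = (\<Sum>k<length zs. length (z#a) + k + 1)
     + mtf2_cost (\<lambda>x. if x \<in> set zs then False else (b(z := False)) x) (rev zs @ (z # a)) rest"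
    using Cons.prems za by (intro Cons.IH) auto
  have fe: "(\<lambda>x. if x \<in> set zs then False else (b(z := False)) x) = (\<lambda>x. if x \<in> set (z#zs) then False else b x)"
    by auto
  have bz: "b z" using Cons.prems by auto
  have "mtf2_cost b (a @ z # zs) ((z # zs) @ rest) = length a + 1 + mtf2_cost (b(z := False)) ((z # a) @ zs) (zs @ rest)"
    using za bz mv by (simp add: pos_append Let_def)
  also have "\<dots> = (\<Sum>k<length (z#zs). length a + k + 1)
     + mtf2_cost (\<lambda>x. if x \<in> set (z#zs) then False else b x) (rev (z#zs) @ a) rest"
    unfolding IH fe by (simp add: sum.lessThan_Suc_shift del: sum.lessThan_Suc)
  finally show ?case by simp
qed

lemma P2: "distinct (d @ rev zs) \<Longrightarrow> \<forall>z\<in>set zs. \<not> b z \<Longrightarrow>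
  mtf2_cost b (d @ rev zs) (triple zs @ rest) = length zs * (2 * (length d + length zs) + 1)
     + mtf2_cost (\<lambda>x. if x \<in> set zs then True else b x) (rev zs @ d) rest"
proof (induction zs arbitrary: d b)
  case Nil
  then show ?case by simp
next
  case (Cons z zs)
  have za: "z \<notin> set d" "z \<notin> set zs" using Cons.prems by auto
  have mv: "move_to 0 z (d @ rev zs @ [z]) = (z # d) @ rev zs"
    using za by (simp add: move_to_0 remove1_append)
  have IH: "mtf2_cost (b(z := True)) ((z # d) @ rev zs) (triple zs @ rest) = length zs * (2 * (length (z#d) + length zs) + 1)
     + mtf2_cost (\<lambda>x. if x \<in> set zs then True else (b(z := True)) x) (rev zs @ (z # d)) rest"
    using Cons.prems za by (intro Cons.IH) auto
  have fe: "(\<lambda>x. if x \<in> set zs then True else (b(z := True)) x) = (\<lambda>x. if x \<in> set (z#zs) then True else b x)"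
    by auto
  have bz: "\<not> b z" using Cons.prems by auto
  have "mtf2_cost b (d @ rev (z # zs)) (triple (z # zs) @ rest) =
     2 * (length d + length zs) + 3 + mtf2_cost (b(z := True)) ((z # d) @ rev zs) (triple zs @ rest)"
    using za bz mv by (simp add: pos_append Let_def)
  also have "\<dots> = length (z#zs) * (2 * (length d + length (z#zs)) + 1)
     + mtf2_cost (\<lambda>x. if x \<in> set (z#zs) then True else b x) (rev (z#zs) @ d) rest"
    unfolding IH fe by simp
  finally show ?case .
qed


lemma P0: "distinct zs \<Longrightarrow> \<forall>z\<in>set zs. \<not> b z \<Longrightarrow>
  mtf2_cost (\<lambda>x. if x \<in> set zs then True else b x) L rest \<le> mtf2_cost b L (zs @ rest)"
proof (induction zs arbitrary: b)
  case Nil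
  then show ?case by simp
next
  case (Cons z zs)
  have IH: "mtf2_cost (\<lambda>x. if x \<in> set zs then True else (b(z := True)) x) L rest \<le> mtf2_cost (b(z:=True)) L (zs @ rest)"
    using Cons.prems by (intro Cons.IH) auto
  have fe: "(\<lambda>x. if x \<in> set zs then True else (b(z := True)) x) = (\<lambda>x. if x \<in> set (z#zs) then True else b x)"
    by auto
  have bz: "\<not> b z" using Cons.prems by auto
  have "mtf2_cost b L ((z # zs) @ rest) = pos z L + 1 + mtf2_cost (b(z:=True)) L (zs @ rest)"
    using bz by (simp add: Let_def)
  then show ?case using IH fe by simp
qed

lemma offline_cong: "offline xs rs c \<Longrightarrow> c = d \<Longrightarrow> offline xs rs d" by simp

lemma off_step: "r \<in> set ys \<Longrightarrow> q \<le> pos r ys \<Longrightarrow> offline (move_to q r ys) rs c \<Longrightarrow>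
   d = pos r ys + 1 + c \<Longrightarrow> offline ys (r # rs) d"
  using off_cons[OF paid_refl, of r ys q rs c] by simp

lemma O1: "offline L rest c \<Longrightarrow> set zs \<subseteq> set L \<Longrightarrow>
   offline L (zs @ rest) (c + (\<Sum>y\<leftarrow>zs. pos y L + 1))"
proof (induction zs)
  case Nil
  then show ?case by simp
next
  case (Cons z zs)
  show ?case
    apply (simp only: append_Cons)
    apply (rule off_step[where q="pos z L"])
    using Cons by (auto simp: move_to_pos)
qed

lemma sum_pos: "distinct (a @ zs) \<Longrightarrow> (\<Sum>y\<leftarrow>zs. pos y (a @ zs) + 1) = (\<Sum>k<length zs. length a + k + 1)"
proof (induction zs arbitrary: a)
  case Nil
  then show ?case by simp
next
  case (Cons z zs)
  have "(\<Sum>y\<leftarrow>zs. pos y ((a @ [z]) @ zs) + 1) = (\<Sum>k<length zs. length (a@[z]) + k + 1)"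
    using Cons.prems by (intro Cons.IH) auto
  then show ?case using Cons.prems
    by (simp add: pos_append sum.lessThan_Suc_shift del: sum.lessThan_Suc)
qed

lemma O2: "offline (rev zs @ a) rest c \<Longrightarrow> distinct (a @ zs) \<Longrightarrow>
   offline (a @ zs) (triple zs @ rest) (c + (\<Sum>k<length zs. length a + k + 3))"
proof (induction zs arbitrary: a c)
  case Nil
  then show ?case by simp
next
  case (Cons z zs)
  have za: "z \<notin> set a" "z \<notin> set zs" using Cons.prems by auto
  have mv: "move_to 0 z (a @ z # zs) = (z # a) @ zs"
    using za by (simp add: move_to_0 remove1_append)
  have mv2: "move_to 0 z ((z # a) @ zs) = (z # a) @ zs"
    by (simp add: move_to_0)
  have IH: "offline ((z # a) @ zs) (triple zs @ rest) (c + (\<Sum>k<length zs. length (z#a) + k + 3))"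
    using Cons.prems by (intro Cons.IH) auto
  have s2: "offline ((z # a) @ zs) (z # triple zs @ rest) (1 + (c + (\<Sum>k<length zs. length (z#a) + k + 3)))"
    apply (rule off_step[where q=0])
    using IH mv2 by auto
  have s1: "offline ((z # a) @ zs) (z # z # triple zs @ rest) (2 + (c + (\<Sum>k<length zs. length (z#a) + k + 3)))"
    apply (rule off_step[where q=0])
    using s2 mv2 by auto
  have s0: "offline (a @ z # zs) (z # z # z # triple zs @ rest) (length a + 3 + (c + (\<Sum>k<length zs. length (z#a) + k + 3)))"
    apply (rule off_step[where q=0])
    using s1 mv za by (auto simp: pos_append)
  show ?case apply (rule offline_cong) using s0 apply simp
    by (simp add: sum.lessThan_Suc_shift del: sum.lessThan_Suc)
qed


definition per :: "'a list \<Rightarrow> 'a list" where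
  "per xs = xs @ triple xs @ rev xs @ triple (rev xs)"

definition PA :: "nat \<Rightarrow> nat" where
  "PA l = 2 * (\<Sum>k<l. k + 1) + 2 * (l * (2 * l + 1))"

definition PO :: "nat \<Rightarrow> nat" where
  "PO l = 2 * (\<Sum>k<l. k + 1) + 2 * (\<Sum>k<l. k + 3)"

lemma online_per: "distinct xs \<Longrightarrow> \<forall>x\<in>set xs. b x \<Longrightarrow>
  mtf2_cost b xs (per xs @ rest) = PA (length xs) + mtf2_cost b xs rest"
proof -
  assume d: "distinct xs" and bt: "\<forall>x\<in>set xs. b x"
  define b1 where "b1 = (\<lambda>x. if x \<in> set xs then False else b x)"
  define b2 where "b2 = (\<lambda>x. if x \<in> set xs then True else b1 x)"
  define b3 where "b3 = (\<lambda>x. if x \<in> set (rev xs) then False else b2 x)"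
  define b4 where "b4 = (\<lambda>x. if x \<in> set (rev xs) then True else b3 x)"
  have b4: "b4 = b" using bt by (auto simp: b4_def b3_def b2_def b1_def)
  have e1: "mtf2_cost b xs (xs @ (triple xs @ rev xs @ triple (rev xs) @ rest)) =
     (\<Sum>k<length xs. k + 1) + mtf2_cost b1 (rev xs) (triple xs @ rev xs @ triple (rev xs) @ rest)"
    using P1[of "[]" xs b "triple xs @ rev xs @ triple (rev xs) @ rest"] d bt by (simp add: b1_def)
  have e2: "mtf2_cost b1 (rev xs) (triple xs @ (rev xs @ triple (rev xs) @ rest)) =
     length xs * (2 * length xs + 1) + mtf2_cost b2 (rev xs) (rev xs @ triple (rev xs) @ rest)"
    using P2[of "[]" xs b1 "rev xs @ triple (rev xs) @ rest"] d by (simp add: b1_def b2_def)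
  have e3: "mtf2_cost b2 (rev xs) (rev xs @ (triple (rev xs) @ rest)) =
     (\<Sum>k<length xs. k + 1) + mtf2_cost b3 xs (triple (rev xs) @ rest)"
    using P1[of "[]" "rev xs" b2 "triple (rev xs) @ rest"] d by (simp add: b3_def b2_def)
  have e4: "mtf2_cost b3 xs (triple (rev xs) @ rest) =
     length xs * (2 * length xs + 1) + mtf2_cost b4 xs rest"
    using P2[of "[]" "rev xs" b3 rest] d by (simp add: b4_def b3_def)
  show ?thesis using e1 e2 e3 e4 b4 by (simp add: per_def PA_def)
qed

lemma online_pers: "distinct xs \<Longrightarrow> \<forall>x\<in>set xs. b x \<Longrightarrow>
  mtf2_cost b xs (concat (replicate m (per xs))) = m * PA (length xs)"
  by (induction m) (simp_all add: online_per)

lemma offline_per: "offline xs rest c \<Longrightarrow> distinct xs \<Longrightarrow>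
  offline xs (per xs @ rest) (c + PO (length xs))"
proof -
  assume o: "offline xs rest c" and d: "distinct xs"
  have h4: "offline (rev xs) (triple (rev xs) @ rest) (c + (\<Sum>k<length xs. k + 3))"
    using O2[of "rev xs" "[]" rest c] o d by simp
  have h3: "offline (rev xs) (rev xs @ triple (rev xs) @ rest) ((c + (\<Sum>k<length xs. k + 3)) + (\<Sum>k<length xs. k + 1))"
    using O1[OF h4, of "rev xs"] sum_pos[of "[]" "rev xs"] d by simp
  have h2: "offline xs (triple xs @ rev xs @ triple (rev xs) @ rest) ((c + (\<Sum>k<length xs. k + 3)) + (\<Sum>k<length xs. k + 1) + (\<Sum>k<length xs. k + 3))"
    using O2[of xs "[]" _ _] h3 d by simp
  have h1: "offline xs (xs @ triple xs @ rev xs @ triple (rev xs) @ rest) ((c + (\<Sum>k<length xs. k + 3)) + (\<Sum>k<length xs. k + 1) + (\<Sum>k<length xs. k + 3) + (\<Sum>k<length xs. k + 1))"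
    using O1[OF h2, of xs] sum_pos[of "[]" xs] d by simp
  show ?thesis apply (rule offline_cong) using h1 apply (simp add: per_def)
    by (simp add: PO_def)
qed

lemma offline_pers: "distinct xs \<Longrightarrow> offline xs (concat (replicate m (per xs))) (m * PO (length xs))"
proof (induction m)
  case 0
  then show ?case by (simp add: off_nil)
next
  case (Suc m)
  then show ?case using offline_per[OF Suc.IH[OF Suc.prems] Suc.prems] by (simp add: add.commute)
qed

lemma sum_tri: "2 * (\<Sum>k<l. k + 1) = l * (l + 1::nat)"
  by (induction l) (auto simp: algebra_simps)

lemma PA_eq: "PA l = 5 * l * l + 3 * l"
  using sum_tri[of l] by (simp add: PA_def algebra_simps)

lemma PO_eq: "PO l = 2 * l * l + 6 * l"
proof -
  have "(\<Sum>k<l. k + 3) = (\<Sum>k<l. k + 1) + 2 * l" by (induction l) auto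
  then show ?thesis using sum_tri[of l] by (simp add: PO_def algebra_simps)
qed


lemma sum_list_le: "(\<forall>y\<in>set ys. f y \<le> (K::nat)) \<Longrightarrow> sum_list (map f ys) \<le> length ys * K"
  by (induction ys) auto

lemma OPT_le: "offline xs rs c \<Longrightarrow> OPT xs rs \<le> c"
  unfolding OPT_def by (rule cInf_lower) auto

lemma not_comp:
  fixes init :: "nat list \<Rightarrow> nat \<Rightarrow> bool"
  assumes c: "c < 5/2"
  shows "\<not> competitive (MTF2 init) c"
proof
  assume comp: "competitive (MTF2 init) c"
  define d where "d = max c 0"
  have d0: "d \<ge> 0" and dc: "d < 5/2" and cd: "c \<le> d" using c by (auto simp: d_def)
  obtain l :: nat where l: "6 * d / (5 - 2 * d) < real l" using reals_Archimedean2 by blast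
  have pos5: "5 - 2 * d > 0" using dc by simp
  have "6 * d / (5 - 2 * d) \<ge> 0" using d0 pos5 by simp
  hence lpos: "real l > 0" using l by linarith
  have "6 * d < real l * (5 - 2 * d)" using l pos5 by (simp add: divide_less_eq)
  hence inner: "real l * (5 - 2 * d) + 3 - 6 * d > 0" by linarith
  define gap where "gap = real (PA l) - d * real (PO l)"
  have "gap = real l * (real l * (5 - 2 * d) + 3 - 6 * d)"
    unfolding gap_def PA_eq PO_eq by (simp add: algebra_simps)
  hence gap: "gap > 0" using lpos inner by simp
  from comp obtain b :: real where bb: "\<forall>xs rs. distinct xs \<and> length xs = l \<and> set rs \<subseteq> set xs \<longrightarrow>
        real (MTF2 init xs rs) \<le> c * real (OPT xs rs) + b"
    unfolding competitive_def by blast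
  obtain m :: nat where m: "(d * real (l * l) + b) / gap < real m" using reals_Archimedean2 by blast
  define xs where "xs = [0..<l]"
  define b0 where "b0 = init xs"
  define P where "P = filter (\<lambda>z. \<not> b0 z) xs"
  define g where "g = (\<lambda>x. if x \<in> set P then True else b0 x)"
  define rs where "rs = P @ concat (replicate m (per xs))"
  have dxs: "distinct xs" and lxs: "length xs = l" by (simp_all add: xs_def)
  have srs: "set rs \<subseteq> set xs" by (auto simp: rs_def P_def per_def)
  have "mtf2_cost g xs (concat (replicate m (per xs))) \<le> mtf2_cost b0 xs rs"
    unfolding rs_def g_def by (rule P0) (auto simp: P_def dxs)
  moreover have "mtf2_cost g xs (concat (replicate m (per xs))) = m * PA l"
    using online_pers[OF dxs, of g m] lxs by (auto simp: g_def P_def)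
  ultimately have "m * PA l \<le> MTF2 init xs rs"
    by (simp add: MTF2_def b0_def)
  hence A: "real (m * PA l) \<le> real (MTF2 init xs rs)" by (simp only: of_nat_le_iff)
  have off: "offline xs rs (m * PO l + (\<Sum>y\<leftarrow>P. pos y xs + 1))"
    unfolding rs_def using O1[OF offline_pers[OF dxs, of m], of P] lxs by (auto simp: P_def)
  have "(\<Sum>y\<leftarrow>P. pos y xs + 1) \<le> length P * l"
    by (rule sum_list_le) (auto simp: P_def lxs[symmetric] Suc_le_eq pos_less)
  moreover have "length P \<le> l" using lxs length_filter_le[of _ xs] by (simp add: P_def)
  ultimately have "(\<Sum>y\<leftarrow>P. pos y xs + 1) \<le> l * l"
    by (meson le_trans mult_le_mono1)
  hence "OPT xs rs \<le> m * PO l + l * l" using OPT_le[OF off] by linarith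
  hence O: "real (OPT xs rs) \<le> real m * real (PO l) + real (l * l)"
    by (metis of_nat_add of_nat_le_iff of_nat_mult)
  have B: "real (MTF2 init xs rs) \<le> c * real (OPT xs rs) + b" using bb dxs lxs srs by blast
  have "c * real (OPT xs rs) \<le> d * real (OPT xs rs)" using cd by (simp add: mult_right_mono)
  also have "\<dots> \<le> d * (real m * real (PO l) + real (l * l))" using O d0 by (simp add: mult_left_mono)
  finally have C: "c * real (OPT xs rs) \<le> d * (real m * real (PO l) + real (l * l))" .
  have "d * real (l * l) + b < real m * gap" using m gap by (simp add: divide_less_eq mult.commute)
  hence "d * (real m * real (PO l) + real (l * l)) + b < real (m * PA l)"
    unfolding gap_def by (simp add: algebra_simps)
  thus False using A B C by linarith
qed



definition bef :: "'a \<Rightarrow> 'a \<Rightarrow> 'a list \<Rightarrow> bool" where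
  "bef x y L \<longleftrightarrow> pos x L < pos y L"

lemma pos_notin: "x \<notin> set xs \<Longrightarrow> pos x xs = length xs"
  by (induction xs) auto

lemma nth_pos: "x \<in> set xs \<Longrightarrow> xs ! pos x xs = x"
  by (induction xs) auto

lemma pos_nth: "distinct xs \<Longrightarrow> i < length xs \<Longrightarrow> pos (xs ! i) xs = i"
  by (induction xs arbitrary: i) (auto simp: nth_Cons split: nat.splits)

lemma pos_inj: "x \<in> set L \<Longrightarrow> y \<in> set L \<Longrightarrow> pos x L = pos y L \<Longrightarrow> x = y"
  by (metis nth_pos)

lemma bef_asym: "x \<in> set L \<Longrightarrow> y \<in> set L \<Longrightarrow> x \<noteq> y \<Longrightarrow> bef x y L \<longleftrightarrow> \<not> bef y x L"
  unfolding bef_def using pos_inj by (metis linorder_neqE_nat not_less_iff_gr_or_eq)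

lemma bef_insert: "x \<noteq> r \<Longrightarrow> y \<noteq> r \<Longrightarrow> bef x y (xs @ r # ys) = bef x y (xs @ ys)"
  unfolding bef_def pos_append using pos_less[of x xs] pos_less[of y xs]
  by (auto simp: pos_append)

lemma move_facts:
  assumes d: "distinct M" and r: "r \<in> set M" and q: "q \<le> pos r M"
  shows "distinct (move_to q r M)" "set (move_to q r M) = set M"
    "\<And>x y. x \<noteq> r \<Longrightarrow> y \<noteq> r \<Longrightarrow> bef x y (move_to q r M) = bef x y M"
    "\<And>y. y \<noteq> r \<Longrightarrow> bef y r (move_to q r M) \<Longrightarrow> bef y r M"
proof -
  obtain as bs where M: "M = as @ r # bs" and ras: "r \<notin> set as"
    using split_list_first[OF r] by blast
  define R where "R = as @ bs"
  have rm: "remove1 r M = R" using M ras by (simp add: remove1_append R_def)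
  have mv: "move_to q r M = take q R @ r # drop q R"
    by (simp add: move_to_def rm)
  have pr: "pos r M = length as" using M ras by (simp add: pos_append)
  have rbs: "r \<notin> set bs" using d M by auto
  have dR0: "distinct R" using d M by (simp add: R_def)
  have rR: "r \<notin> set R" using ras rbs by (simp add: R_def)
  have gen: "\<And>xs ys. distinct (xs @ r # ys) = (distinct (xs @ ys) \<and> r \<notin> set (xs @ ys))"
    by auto
  have gen2: "\<And>xs ys. set (xs @ r # ys) = insert r (set (xs @ ys))"
    by auto
  have "distinct (take q R @ r # drop q R)" unfolding gen using dR0 rR by (simp only: append_take_drop_id) simp
  then show "distinct (move_to q r M)" unfolding mv .
  have "set (take q R @ r # drop q R) = insert r (set R)" unfolding gen2 by (simp only: append_take_drop_id)
  also have "\<dots> = set M" using M R_def by auto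
  finally show "set (move_to q r M) = set M" unfolding mv .
  have gen3: "\<And>x y. x \<noteq> r \<Longrightarrow> y \<noteq> r \<Longrightarrow> bef x y (take q R @ r # drop q R) = bef x y R"
    using bef_insert[of _ r _ "take q R" "drop q R"] by (simp only: append_take_drop_id)
  show "\<And>x y. x \<noteq> r \<Longrightarrow> y \<noteq> r \<Longrightarrow> bef x y (move_to q r M) = bef x y M"
    unfolding mv gen3 unfolding M R_def using bef_insert by metis
  show "\<And>y. y \<noteq> r \<Longrightarrow> bef y r (move_to q r M) \<Longrightarrow> bef y r M"
  proof -
    fix y assume yr: "y \<noteq> r" and b: "bef y r (move_to q r M)"
    have rt: "r \<notin> set (take q R)" using rR by (auto dest: in_set_takeD)
    have "y \<in> set (take q R)"
    proof (rule ccontr)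
      assume "y \<notin> set (take q R)"
      then show False using b rt yr unfolding mv bef_def by (simp add: pos_append) arith
    qed
    moreover have "take q R = take q as" using q pr by (simp add: R_def)
    ultimately have "y \<in> set as" by (auto dest: in_set_takeD)
    then show "bef y r M" unfolding bef_def M using ras by (simp add: pos_append pos_less)
  qed
qed

lemma pos_count: "distinct L \<Longrightarrow> r \<in> set L \<Longrightarrow>
  int (pos r L) = (\<Sum>y\<in>set L - {r}. if bef y r L then 1 else 0)"
proof (induction L)
  case Nil
  then show ?case by simp
next
  case (Cons z L)
  show ?case
  proof (cases "r = z")
    case True
    have "set (z # L) - {r} = set L" using Cons.prems True by auto
    moreover have "\<forall>y\<in>set L. \<not> bef y r (z # L)" using True Cons.prems by (auto simp: bef_def)
    ultimately show ?thesis using True by simp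
  next
    case False
    have e: "set (z # L) - {r} = insert z (set L - {r})" using False by auto
    have zn: "z \<notin> set L - {r}" using Cons.prems by auto
    have bz: "bef z r (z # L)" using False by (simp add: bef_def)
    have "(\<Sum>y\<in>set L - {r}. if bef y r (z # L) then 1 else 0) = (\<Sum>y\<in>set L - {r}. if bef y r L then (1::int) else 0)"
      using Cons.prems False by (intro sum.cong) (auto simp: bef_def)
    moreover have IH: "int (pos r L) = (\<Sum>y\<in>set L - {r}. if bef y r L then 1 else 0)"
      using Cons.IH Cons.prems False by simp
    moreover have "(\<Sum>y\<in>insert z (set L - {r}). if bef y r (z # L) then 1 else (0::int)) =
       1 + (\<Sum>y\<in>set L - {r}. if bef y r (z # L) then 1 else 0)"
      using zn bz by (simp add: sum.insert)
    moreover have "pos r (z # L) = Suc (pos r L)" using False by simp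
    ultimately show ?thesis unfolding e by simp
  qed
qed


lemma swap_pos:
  assumes d: "distinct M" and i: "Suc i < length M" and x: "x \<in> set M"
  shows "pos x (swap i M) = (if pos x M = i then Suc i else if pos x M = Suc i then i else pos x M)"
proof -
  define k where "k = pos x M"
  define s where "s = (if k = i then Suc i else if k = Suc i then i else k)"
  have k: "k < length M" "M ! k = x" using x by (simp_all add: k_def pos_less nth_pos)
  have ds: "distinct (swap i M)" using d i by (simp add: swap_def distinct_swap)
  have ls: "length (swap i M) = length M" by (simp add: swap_def)
  have "swap i M ! s = x" using k i by (auto simp: swap_def s_def nth_list_update)
  moreover have "s < length M" using k i by (simp add: s_def)
  ultimately have "pos x (swap i M) = s" using pos_nth[OF ds, of s] ls by simp
  then show ?thesis by (simp add: s_def k_def)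
qed

lemma swap_facts:
  assumes d: "distinct M" and i: "Suc i < length M"
  shows "distinct (swap i M)" "set (swap i M) = set M"
    "\<And>x y. x \<in> set M \<Longrightarrow> y \<in> set M \<Longrightarrow> (x,y) \<noteq> (M!i, M!Suc i) \<Longrightarrow> (x,y) \<noteq> (M!Suc i, M!i) \<Longrightarrow>
        bef x y (swap i M) = bef x y M"
proof -
  show "distinct (swap i M)" using d i by (simp add: swap_def distinct_swap)
  show "set (swap i M) = set M" using i by (simp add: swap_def set_swap)
  fix x y assume x: "x \<in> set M" and y: "y \<in> set M" and n1: "(x,y) \<noteq> (M!i, M!Suc i)" and n2: "(x,y) \<noteq> (M!Suc i, M!i)"
  have "\<not> (pos x M = i \<and> pos y M = Suc i)" using n1 x y nth_pos by metis
  moreover have "\<not> (pos x M = Suc i \<and> pos y M = i)" using n2 x y nth_pos by metis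
  ultimately show "bef x y (swap i M) = bef x y M"
    unfolding bef_def swap_pos[OF d i x] swap_pos[OF d i y] by auto
qed

fun D :: "bool \<Rightarrow> bool \<Rightarrow> bool \<Rightarrow> bool \<Rightarrow> int" where
  "D False False False False = 0"
| "D False False False True = 4"
| "D False False True False = 4"
| "D False False True True = 0"
| "D False True False False = 1"
| "D False True False True = 2"
| "D False True True False = 5"
| "D False True True True = 0"
| "D True False False False = 0"
| "D True False False True = 5"
| "D True False True False = 2"
| "D True False True True = 1"
| "D True True False False = 1"
| "D True True False True = 3"
| "D True True True False = 3"
| "D True True True True = 1"

lemma D_nonneg: "0 \<le> D a c u v"
  by (cases a; cases c; cases u; cases v) auto

lemma D_le5: "D a c u v \<le> 5"
  by (cases a; cases c; cases u; cases v) auto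

lemma D_diff5: "D a c u v - D a' c' u' v' \<le> 5"
  using D_le5[of a c u v] D_nonneg[of a' c' u' v'] by linarith

lemma D_req1: "(v' \<longrightarrow> v) \<Longrightarrow> u' = (if a then False else u) \<Longrightarrow>
  D (\<not>a) c u' v' - D a c u v \<le> 5 * of_bool v - 2 * of_bool u"
  by (cases a; cases c; cases u; cases v; cases v') auto

lemma D_req2: "(v' \<longrightarrow> v) \<Longrightarrow> u' = (if a then False else u) \<Longrightarrow>
  D c (\<not>a) (\<not>u') (\<not>v') - D c a (\<not>u) (\<not>v) \<le> 5 * of_bool v - 2 * of_bool u"
  by (cases a; cases c; cases u; cases v; cases v') auto

definition prs :: "'a set \<Rightarrow> ('a \<times> 'a) set" where
  "prs S = {p. fst p \<in> S \<and> snd p \<in> S \<and> fst p \<noteq> snd p}"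

lemma finite_prs: "finite S \<Longrightarrow> finite (prs S)"
  by (rule finite_subset[of _ "S \<times> S"]) (auto simp: prs_def)

definition T :: "('a \<Rightarrow> bool) \<Rightarrow> 'a list \<Rightarrow> 'a list \<Rightarrow> 'a \<times> 'a \<Rightarrow> int" where
  "T b L M p = D (b (fst p)) (b (snd p)) (bef (snd p) (fst p) L) (bef (snd p) (fst p) M)"

definition Phi :: "('a \<Rightarrow> bool) \<Rightarrow> 'a list \<Rightarrow> 'a list \<Rightarrow> int" where
  "Phi b L M = (\<Sum>p\<in>prs (set L). T b L M p)"

lemma Phi_nonneg: "0 \<le> Phi b L M"
  unfolding Phi_def T_def by (rule sum_nonneg) (simp add: D_nonneg)

lemma Phi_le: "Phi b L M \<le> 5 * int (length L * length L)"
proof -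
  have "Phi b L M \<le> of_nat (card (prs (set L))) * 5"
    unfolding Phi_def T_def by (rule sum_bounded_above) (simp add: D_le5)
  moreover have "card (prs (set L)) \<le> card (set L \<times> set L)"
    by (rule card_mono) (auto simp: prs_def)
  moreover have "card (set L \<times> set L) \<le> length L * length L"
    by (simp add: card_cartesian_product card_length mult_le_mono)
  ultimately show ?thesis by linarith
qed


lemma Phi_swap:
  assumes d: "distinct M" and sLM: "set L = set M" and i: "Suc i < length M"
  shows "Phi b L (swap i M) \<le> Phi b L M + 10"
proof -
  define S where "S = set L"
  define Q where "Q = {(M!i, M!Suc i), (M!Suc i, M!i)}"
  define \<Delta> where "\<Delta> = (\<lambda>p. T b L (swap i M) p - T b L M p)"
  have fin: "finite (prs S)" by (simp add: finite_prs S_def)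
  have "Phi b L (swap i M) - Phi b L M = (\<Sum>p\<in>prs S. \<Delta> p)"
    unfolding Phi_def \<Delta>_def S_def by (simp add: sum_subtractf)
  also have "\<dots> = (\<Sum>p\<in>prs S \<inter> Q. \<Delta> p) + (\<Sum>p\<in>prs S - Q. \<Delta> p)"
    using fin by (rule sum.Int_Diff)
  also have "(\<Sum>p\<in>prs S - Q. \<Delta> p) = 0"
  proof (rule sum.neutral, rule ballI)
    fix p assume p: "p \<in> prs S - Q"
    obtain x y where pxy: "p = (x, y)" by (cases p)
    have "y \<in> set M" "x \<in> set M" "(y,x) \<noteq> (M!i, M!Suc i)" "(y,x) \<noteq> (M!Suc i, M!i)"
      using p sLM by (auto simp: pxy prs_def S_def Q_def)
    then have "bef y x (swap i M) = bef y x M" by (rule swap_facts(3)[OF d i])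
    then show "\<Delta> p = 0" by (simp add: \<Delta>_def T_def pxy)
  qed
  also have "(\<Sum>p\<in>prs S \<inter> Q. \<Delta> p) \<le> of_nat (card (prs S \<inter> Q)) * 5"
    by (rule sum_bounded_above) (simp add: \<Delta>_def T_def D_diff5)
  also have "card (prs S \<inter> Q) \<le> 2"
  proof -
    have "card (prs S \<inter> Q) \<le> card Q" by (rule card_mono) (auto simp: Q_def)
    also have "card Q \<le> 2" by (simp add: Q_def card_insert_le_m1)
    finally show ?thesis .
  qed
  hence "of_nat (card (prs S \<inter> Q)) * 5 \<le> (10::int)" by linarith
  finally show ?thesis by linarith
qed


lemma Phi_req:
  fixes b :: "'a \<Rightarrow> bool"
  assumes dL: "distinct L" and dM: "distinct M" and sLM: "set L = set M"
    and r: "r \<in> set M" and q: "q \<le> pos r M"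
  defines "b' \<equiv> b(r := \<not> b r)"
  defines "L' \<equiv> (if b' r then L else move_to 0 r L)"
  defines "M' \<equiv> move_to q r M"
  shows "4 * int (pos r L + 1) + Phi b' L' M' \<le> 10 * int (pos r M + 1) + Phi b L M"
    and "distinct L'" "set L' = set L" "distinct M'" "set M' = set M"
proof -
  define S where "S = set L"
  have rL: "r \<in> set L" using r sLM by simp
  have mL: "distinct (move_to 0 r L)" "set (move_to 0 r L) = set L"
    "\<And>x y. x \<noteq> r \<Longrightarrow> y \<noteq> r \<Longrightarrow> bef x y (move_to 0 r L) = bef x y L"
    using move_facts[OF dL rL, of 0] by auto
  show dL': "distinct L'" and sL': "set L' = set L" using mL dL by (auto simp: L'_def)
  have bL1: "\<And>x y. x \<noteq> r \<Longrightarrow> y \<noteq> r \<Longrightarrow> bef x y L' = bef x y L"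
    using mL by (auto simp: L'_def)
  have bL2: "\<And>y. y \<noteq> r \<Longrightarrow> bef y r L' = (if b r then False else bef y r L)"
    by (auto simp: L'_def b'_def bef_def move_to_0)
  show dM': "distinct M'" and sM': "set M' = set M"
    using move_facts[OF dM r q] by (auto simp: M'_def)
  have bM1: "\<And>x y. x \<noteq> r \<Longrightarrow> y \<noteq> r \<Longrightarrow> bef x y M' = bef x y M"
    and bM2: "\<And>y. y \<noteq> r \<Longrightarrow> bef y r M' \<Longrightarrow> bef y r M"
    using move_facts[OF dM r q] by (auto simp: M'_def)
  define \<Delta> where "\<Delta> = (\<lambda>p. T b' L' M' p - T b L M p)"
  define U where "U = (\<lambda>y. of_bool (bef y r L) :: int)"
  define V where "V = (\<lambda>y. of_bool (bef y r M) :: int)"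
  have fin: "finite (prs S)" by (simp add: finite_prs S_def)
  define Q1 where "Q1 = (\<lambda>y. (r, y)) ` (S - {r})"
  define Q2 where "Q2 = (\<lambda>y. (y, r)) ` (S - {r})"
  have Qsub: "Q1 \<union> Q2 \<subseteq> prs S" using rL by (auto simp: Q1_def Q2_def prs_def S_def)
  have "Phi b' L' M' - Phi b L M = (\<Sum>p\<in>prs S. \<Delta> p)"
    unfolding Phi_def \<Delta>_def S_def sL' by (simp add: sum_subtractf)
  also have "\<dots> = (\<Sum>p\<in>Q1 \<union> Q2. \<Delta> p)"
  proof (rule sum.mono_neutral_right[OF fin Qsub], rule ballI)
    fix p assume p: "p \<in> prs S - (Q1 \<union> Q2)"
    obtain x y where pxy: "p = (x, y)" by (cases p)
    have xr: "x \<noteq> r" and yr: "y \<noteq> r" using p by (auto simp: pxy prs_def Q1_def Q2_def)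
    show "\<Delta> p = 0" using xr yr bL1 bM1 by (simp add: \<Delta>_def T_def pxy b'_def)
  qed
  also have "\<dots> = (\<Sum>p\<in>Q1. \<Delta> p) + (\<Sum>p\<in>Q2. \<Delta> p)"
    by (rule sum.union_disjoint) (auto simp: Q1_def Q2_def S_def)
  also have "(\<Sum>p\<in>Q1. \<Delta> p) = (\<Sum>y\<in>S - {r}. \<Delta> (r, y))"
    unfolding Q1_def by (rule sum.reindex_cong[where l="\<lambda>y. (r, y)"]) (auto simp: inj_on_def)
  also have "(\<Sum>p\<in>Q2. \<Delta> p) = (\<Sum>y\<in>S - {r}. \<Delta> (y, r))"
    unfolding Q2_def by (rule sum.reindex_cong[where l="\<lambda>y. (y, r)"]) (auto simp: inj_on_def)
  finally have eq: "Phi b' L' M' - Phi b L M = (\<Sum>y\<in>S - {r}. \<Delta> (r, y)) + (\<Sum>y\<in>S - {r}. \<Delta> (y, r))" .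
  have le1: "(\<Sum>y\<in>S - {r}. \<Delta> (r, y)) \<le> (\<Sum>y\<in>S - {r}. 5 * V y - 2 * U y)"
  proof (rule sum_mono)
    fix y assume y: "y \<in> S - {r}"
    have "D (\<not> b r) (b y) (bef y r L') (bef y r M') - D (b r) (b y) (bef y r L) (bef y r M)
       \<le> 5 * of_bool (bef y r M) - 2 * of_bool (bef y r L)"
      by (rule D_req1) (use y bM2 bL2 in auto)
    moreover have "\<Delta> (r, y) = D (\<not> b r) (b y) (bef y r L') (bef y r M') - D (b r) (b y) (bef y r L) (bef y r M)"
      using y by (simp add: \<Delta>_def T_def b'_def)
    ultimately show "\<Delta> (r, y) \<le> 5 * V y - 2 * U y"
      by (simp only: U_def V_def)
  qed
  have le2: "(\<Sum>y\<in>S - {r}. \<Delta> (y, r)) \<le> (\<Sum>y\<in>S - {r}. 5 * V y - 2 * U y)"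
  proof (rule sum_mono)
    fix y assume y: "y \<in> S - {r}"
    have yL: "y \<in> set L" and yr: "y \<noteq> r" using y by (auto simp: S_def)
    have a1: "bef r y L' = (\<not> bef y r L')" using bef_asym[of r L' y] dL' sL' rL yL yr by auto
    have a2: "bef r y M' = (\<not> bef y r M')" using bef_asym[of r M' y] sM' sLM r yL yr by auto
    have a3: "bef r y L = (\<not> bef y r L)" using bef_asym[of r L y] rL yL yr by auto
    have a4: "bef r y M = (\<not> bef y r M)" using bef_asym[of r M y] sLM r yL yr by auto
    have "D (b y) (\<not> b r) (\<not> bef y r L') (\<not> bef y r M') - D (b y) (b r) (\<not> bef y r L) (\<not> bef y r M)
       \<le> 5 * of_bool (bef y r M) - 2 * of_bool (bef y r L)"
      by (rule D_req2) (use y bM2 bL2 in auto)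
    moreover have "\<Delta> (y, r) = D (b y) (\<not> b r) (bef r y L') (bef r y M') - D (b y) (b r) (bef r y L) (bef r y M)"
      using yr by (simp add: \<Delta>_def T_def b'_def)
    ultimately show "\<Delta> (y, r) \<le> 5 * V y - 2 * U y"
      unfolding a1 a2 a3 a4 by (simp only: U_def V_def)
  qed
  have cL: "int (pos r L) = (\<Sum>y\<in>S - {r}. U y)"
    using pos_count[OF dL rL] by (simp add: U_def S_def of_bool_def)
  have cM: "int (pos r M) = (\<Sum>y\<in>S - {r}. V y)"
    using pos_count[OF dM r] sLM by (simp add: V_def S_def of_bool_def)
  have "(\<Sum>y\<in>S - {r}. 5 * V y - 2 * U y) = 5 * (\<Sum>y\<in>S - {r}. V y) - 2 * (\<Sum>y\<in>S - {r}. U y)"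
    by (simp add: sum_subtractf sum_distrib_left)
  show "4 * int (pos r L + 1) + Phi b' L' M' \<le> 10 * int (pos r M + 1) + Phi b L M"
  proof -
    have "int (pos r L + 1) = int (pos r L) + 1" "int (pos r M + 1) = int (pos r M) + 1" by simp_all
    moreover have "Phi b' L' M' - Phi b L M \<le> 10 * int (pos r M) - 4 * int (pos r L)"
      using eq le1 le2 unfolding cL cM \<open>(\<Sum>y\<in>S - {r}. 5 * V y - 2 * U y) = _\<close> by linarith
    ultimately show ?thesis by (simp add: algebra_simps)
  qed
qed


lemma Phi_paid: "paid M0 M k \<Longrightarrow> distinct M0 \<Longrightarrow> set L = set M0 \<Longrightarrow>
   distinct M \<and> set M = set M0 \<and> Phi b L M \<le> Phi b L M0 + 10 * int k"
proof (induction rule: paid.induct)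
  case (paid_refl xs)
  then show ?case by simp
next
  case (paid_step xs ys k i)
  then have IH: "distinct ys" "set ys = set xs" "Phi b L ys \<le> Phi b L xs + 10 * int k" by auto
  have "Phi b L (swap i ys) \<le> Phi b L ys + 10"
    using Phi_swap[OF IH(1) _ paid_step.hyps(2)] IH(2) paid_step.prems by simp
  then show ?case using swap_facts[OF IH(1) paid_step.hyps(2)] IH by simp
qed

lemma main_bound: "offline M rs c \<Longrightarrow> distinct L \<Longrightarrow> distinct M \<Longrightarrow> set L = set M \<Longrightarrow>
   4 * int (mtf2_cost b L rs) \<le> 10 * int c + Phi b L M"
proof (induction M rs c arbitrary: b L rule: offline.induct)
  case (off_nil xs)
  then show ?case using Phi_nonneg[of b L xs] by simp
next
  case (off_cons xs ys k r q rs c)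
  have P: "distinct ys" "set ys = set xs" "Phi b L ys \<le> Phi b L xs + 10 * int k"
    using Phi_paid[OF off_cons.hyps(1) off_cons.prems(2)] off_cons.prems(3) by auto
  define b' where "b' = b(r := \<not> b r)"
  define L' where "L' = (if b' r then L else move_to 0 r L)"
  define M' where "M' = move_to q r ys"
  have sLy: "set L = set ys" using P off_cons.prems by simp
  note R = Phi_req(1)[OF off_cons.prems(1) P(1) sLy off_cons.hyps(2) off_cons.hyps(3), of b,
     folded b'_def, folded L'_def, folded M'_def]
  note R2 = Phi_req(2)[OF off_cons.prems(1) P(1) sLy off_cons.hyps(2) off_cons.hyps(3), of b,
     folded b'_def, folded L'_def]
  note R3 = Phi_req(3)[OF off_cons.prems(1) P(1) sLy off_cons.hyps(2) off_cons.hyps(3), of b,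
     folded b'_def, folded L'_def]
  note R4 = Phi_req(4,5)[OF off_cons.prems(1) P(1) sLy off_cons.hyps(2) off_cons.hyps(3), folded M'_def]
  have IH: "4 * int (mtf2_cost b' L' rs) \<le> 10 * int c + Phi b' L' M'"
    using off_cons.IH[of L' b'] R2 R3 R4 sLy by (simp add: M'_def)
  have "mtf2_cost b L (r # rs) = pos r L + 1 + mtf2_cost b' L' rs"
    by (simp add: Let_def b'_def L'_def)
  then show ?case using IH R(1) P(3) by simp
qed

lemma exists_off: "set rs \<subseteq> set xs \<Longrightarrow> \<exists>c. offline xs rs c"
proof (induction rs)
  case Nil
  then show ?case using off_nil by blast
next
  case (Cons r rs)
  then obtain c where "offline xs rs c" by auto
  then have "offline xs (r # rs) (pos r xs + 1 + c)"
    using Cons.prems by (intro off_step[where q="pos r xs"]) (auto simp: move_to_pos)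
  then show ?case by blast
qed

lemma upper: "competitive (MTF2 init) (5/2)"
  unfolding competitive_def
proof
  fix l
  show "\<exists>b::real. \<forall>xs rs. distinct xs \<and> length xs = l \<and> set rs \<subseteq> set xs \<longrightarrow>
        real (MTF2 init xs rs) \<le> 5/2 * real (OPT xs rs) + b"
  proof (intro exI allI impI)
    fix xs rs :: "nat list"
    assume a: "distinct xs \<and> length xs = l \<and> set rs \<subseteq> set xs"
    have "OPT xs rs \<in> {c. offline xs rs c}"
      unfolding OPT_def using exists_off a by (intro Inf_nat_def1) auto
    then have off: "offline xs rs (OPT xs rs)" by simp
    have "4 * int (mtf2_cost (init xs) xs rs) \<le> 10 * int (OPT xs rs) + Phi (init xs) xs xs"
      using main_bound[OF off] a by simp
    moreover have "Phi (init xs) xs xs \<le> 5 * int (l * l)" using Phi_le a by blast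
    ultimately have "4 * int (MTF2 init xs rs) \<le> 10 * int (OPT xs rs) + 5 * int (l * l)"
      by (simp add: MTF2_def)
    then have "4 * real (MTF2 init xs rs) \<le> 10 * real (OPT xs rs) + 5 * real (l * l)"
      by (metis (mono_tags, opaque_lifting) of_int_le_iff of_int_add of_int_mult of_int_of_nat_eq of_int_numeral)
    then show "real (MTF2 init xs rs) \<le> 5/2 * real (OPT xs rs) + 5/4 * real (l * l)"
      by simp
  qed
qed

theorem theorem7:
  fixes init :: "nat list \<Rightarrow> nat \<Rightarrow> bool"
  shows "competitive_ratio (MTF2 init) = 5 / 2"
  unfolding competitive_ratio_def
proof (rule cInf_eq_minimum)
  show "5/2 \<in> {c. competitive (MTF2 init) c}" using upper by simp
  fix x assume "x \<in> {c. competitive (MTF2 init) c}"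
  then show "5/2 \<le> x" using not_comp[of x init] by force
qed

end
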